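(* Suppose Assumptions 1, 2, 6 and 7 hold (Assumption 5 is not required), and all eight cells $\{D=d,G=g,T=t\}$ have positive probability. For $d\in\{0,1\}$ and $g\in\{0,1\}$ let $p_{d|gt}=P(D_{gt}=d)$, $\lambda_{gd}=p_{d|g1}/p_{d|g0}$, $F_{dgt}=F_{Y_{dgt}}$ and $H_d=F_{d10}\circ F_{d00}^{-1}$. Let $S'=\{D(0)\neq D(1),\,G=0\}$ and let $F_{Y_{01}(d)\mid S'}$ denote the cdf of $Y(d)$ conditional on $S'$ and $T=1$ (when $P(S')=0$, $\lambda_{0d}=1$ and the corresponding term below is omitted). Then for $d\in\{0,1\}$, $$F_{Y(d)\mid S,T=1}=\frac{p_{d|11}F_{d11}-p_{d|10}\,H_d\circ\big(\lambda_{0d}F_{d01}+(1-\lambda_{0d})F_{Y_{01}(d)\mid S'}\big)}{p_{d|11}-p_{d|10}}.$$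
   Context: Standing framework. Let $(Y(0),Y(1),V,G,T)$ be random variables on a common probability space, with $G\in\{0,1\}$ (group; $G=1$ is the "treatment group"), $T\in\{0,1\}$ (period), $V$ real-valued, and let $(v_{gt})_{(g,t)\in\{0,1\}^2}$ be real constants. The treatment is $D=1\{V\geq v_{GT}\}$ and the potential treatments are $D(t)=1\{V\geq v_{Gt}\}$, $t\in\{0,1\}$, so that $D=D(T)$. The observed outcome is $Y=DY(1)+(1-D)Y(0)$. For any random variable $R$, $R_{gt}$ denotes a random variable distributed as $R$ conditional on $\{G=g,T=t\}$ and $R_{dgt}$ one distributed as $R$ conditional on $\{D=d,G=g,T=t\}$. $F_R$ is the cdf of $R$, $\mathrm{Supp}(R)$ its support, and for a nondecreasing $F$, $F^{-1}(q)=\inf\{x\in\mathbb{R}:F(x)\geq q\}$. Let $S=\{D(0)<D(1),\,G=1\}$. Assumption 1: $D=1\{V\geq v_{GT}\}$ with $V$ independent of $T$ conditional on $G$. Assumption 2: $E(D_{11})>E(D_{10})$ and $E(D_{11})-E(D_{10})>E(D_{01})-E(D_{00})$. Assumption 6: for $d\in\{0,1\}$, $Y(d)=h_d(U_d,T)$ with $U_d$ real-valued and $u\mapsto h_d(u,t)$ strictly increasing for each $t\in\{0,1\}$; moreover $U_d$ is independent of $T$ conditional on $(G,D(0))$. Assumption 7: (i) $\mathrm{Supp}(Y_{dgt})=\mathrm{Supp}(Y)$ for all $(d,g,t)$, and $\mathrm{Supp}(Y)$ is a closed interval of $\mathbb{R}$; (ii) each $F_{Y_{dgt}}$ is continuous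 on $\mathbb{R}$ and strictly increasing on $\mathrm{Supp}(Y)$. *)

theory Defs
  imports "HOL-Probability.Probability"
begin

definition ccdf :: "'a measure \<Rightarrow> ('a \<Rightarrow> real) \<Rightarrow> 'a set \<Rightarrow> real \<Rightarrow> real" where
  "ccdf M X A y = measure M {\<omega> \<in> A. X \<omega> \<le> y} / measure M A"

definition csupp :: "'a measure \<Rightarrow> ('a \<Rightarrow> real) \<Rightarrow> 'a set \<Rightarrow> real set" where
  "csupp M X A = {x. \<forall>e>0. measure M {\<omega> \<in> A. X \<omega> \<in> ball x e} > 0}"

definition qinv :: "(real \<Rightarrow> real) \<Rightarrow> real \<Rightarrow> ereal" where
  "qinv F q = Inf {ereal x | x. q \<le> F x}"

definition cdf_ext :: "(real \<Rightarrow> real) \<Rightarrow> ereal \<Rightarrow> real" where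
  "cdf_ext F e = (case e of ereal x \<Rightarrow> F x | PInfty \<Rightarrow> 1 | MInfty \<Rightarrow> 0)"

end

theory Submission
  imports Defs
begin
lemma sets_sub:
  assumes "A \<in> sets M" "X \<in> borel_measurable M" "P \<in> sets borel"
  shows "{\<omega>\<in>A. X \<omega> \<in> P} \<in> sets M"
proof -
  have "{\<omega>\<in>A. X \<omega> \<in> P} = A \<inter> (X -` P \<inter> space M)"
    using sets.sets_into_space[OF assms(1)] by auto
  thus ?thesis using assms measurable_sets by (metis sets.Int)
qed

lemma sets_le:
  fixes X :: "'a \<Rightarrow> real"
  assumes "A \<in> sets M" "X \<in> borel_measurable M"
  shows "{\<omega>\<in>A. X \<omega> \<le> x} \<in> sets M"
  using sets_sub[OF assms atMost_borel[of x]] by simp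

lemma ccdf_mono:
  assumes "prob_space M" "A \<in> sets M" "X \<in> borel_measurable M" "x \<le> x'"
  shows "ccdf M X A x \<le> ccdf M X A x'"
proof -
  interpret prob_space M by fact
  have "measure M {\<omega>\<in>A. X \<omega> \<le> x} \<le> measure M {\<omega>\<in>A. X \<omega> \<le> x'}"
    by (rule finite_measure_mono) (use assms sets_le in auto)
  thus ?thesis unfolding ccdf_def by (simp add: divide_right_mono)
qed

lemma ccdf_nonneg: "ccdf M X A x \<ge> 0" unfolding ccdf_def by simp

lemma ccdf_le1:
  assumes "prob_space M" "A \<in> sets M" "X \<in> borel_measurable M"
  shows "ccdf M X A x \<le> 1"
proof -
  interpret prob_space M by fact
  have "measure M {\<omega>\<in>A. X \<omega> \<le> x} \<le> measure M A"
    by (rule finite_measure_mono) (use assms in auto)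
  moreover have "0 \<le> measure M A" by simp
  ultimately show ?thesis unfolding ccdf_def
    by (smt (verit) divide_le_eq_1)
qed

lemma ccdf_lim_bot:
  assumes "prob_space M" "A \<in> sets M" "X \<in> borel_measurable M" "e > 0"
  shows "\<exists>x. ccdf M X A x < e"
proof -
  interpret prob_space M by fact
  let ?B = "\<lambda>n::nat. {\<omega>\<in>A. X \<omega> \<le> - real n}"
  have "(\<lambda>n. measure M (?B n)) \<longlonglongrightarrow> measure M (\<Inter> (range ?B))"
    by (rule finite_Lim_measure_decseq) (use assms sets_le in \<open>auto simp: monotone_on_def\<close>)
  moreover have "\<Inter> (range ?B) = {}"
  proof (rule ccontr)
    assume "\<Inter> (range ?B) \<noteq> {}"
    then obtain \<omega> where "\<forall>n. X \<omega> \<le> - real n" by auto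
    moreover obtain n::nat where "real n > - X \<omega>" using reals_Archimedean2 by blast
    ultimately show False by (metis add.inverse_inverse neg_le_iff_le not_less)
  qed
  ultimately have lim: "(\<lambda>n. measure M (?B n)) \<longlonglongrightarrow> 0" by simp
  show ?thesis
  proof (cases "measure M A = 0")
    case True thus ?thesis using assms unfolding ccdf_def by auto
  next
    case False
    hence pos: "measure M A > 0" by (simp add: zero_less_measure_iff)
    from lim have "\<exists>n. measure M (?B n) < e * measure M A"
    proof -
      obtain n0 where "\<forall>n\<ge>n0. norm (measure M (?B n) - 0) < e * measure M A"
        using LIMSEQ_D[OF lim] pos assms(4) by (meson mult_pos_pos)
      thus ?thesis by auto
    qed
    then obtain n where "measure M (?B n) < e * measure M A" by blast
    hence "ccdf M X A (- real n) < e" unfolding ccdf_def using pos by (simp add: divide_less_eq)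
    thus ?thesis by blast
  qed
qed

lemma ccdf_lim_top:
  assumes "prob_space M" "A \<in> sets M" "X \<in> borel_measurable M" "e > 0" "measure M A > 0"
  shows "\<exists>x. ccdf M X A x > 1 - e"
proof -
  interpret prob_space M by fact
  let ?B = "\<lambda>n::nat. {\<omega>\<in>A. X \<omega> \<le> real n}"
  have "(\<lambda>n. measure M (?B n)) \<longlonglongrightarrow> measure M (\<Union> (range ?B))"
    by (rule finite_Lim_measure_incseq) (use assms sets_le in \<open>auto simp: incseq_def\<close>)
  moreover have "\<Union> (range ?B) = A"
  proof -
    have "\<omega> \<in> \<Union> (range ?B)" if "\<omega> \<in> A" for \<omega>
    proof -
      obtain n::nat where "real n > X \<omega>" using reals_Archimedean2 by blast
      thus ?thesis using that by (auto intro!: exI[of _ n])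
    qed
    thus ?thesis by auto
  qed
  ultimately have lim: "(\<lambda>n. measure M (?B n)) \<longlonglongrightarrow> measure M A" by simp
  from lim have "\<exists>n. dist (measure M (?B n)) (measure M A) < e * measure M A"
  proof -
    obtain n0 where "\<forall>n\<ge>n0. norm (measure M (?B n) - measure M A) < e * measure M A"
      using LIMSEQ_D[OF lim] assms(4,5) by (meson mult_pos_pos)
    thus ?thesis by (auto simp: dist_real_def)
  qed
  then obtain n where "dist (measure M (?B n)) (measure M A) < e * measure M A" by blast
  hence "measure M (?B n) > (1 - e) * measure M A" by (auto simp: dist_real_def algebra_simps)
  hence "ccdf M X A (real n) > 1 - e" unfolding ccdf_def using assms(5) by (simp add: less_divide_eq)
  thus ?thesis by blast
qed
lemma cic_core:
  fixes F0 F1 :: "real \<Rightarrow> real"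
  assumes mono0: "mono F0" and cont0: "continuous_on UNIV F0"
    and mono1: "mono F1" and nn1: "\<forall>x. F1 x \<ge> 0" and bot1: "\<forall>e>0. \<exists>x. F1 x < e"
    and tr: "\<forall>x1 x2. x1 \<le> x2 \<and> F0 x1 = F0 x2 \<longrightarrow> F1 x1 = F1 x2"
  shows "cdf_ext F1 (qinv F0 (F0 x0)) = F1 x0"
proof -
  define SS where "SS = {ereal x | x. F0 x0 \<le> F0 x}"
  have q: "qinv F0 (F0 x0) = Inf SS" unfolding qinv_def SS_def by simp
  have le: "Inf SS \<le> ereal x0" unfolding SS_def by (rule Inf_lower) auto
  show ?thesis
  proof (cases "Inf SS")
    case PInf thus ?thesis using le by simp
  next
    case MInf
    have all: "F0 z = F0 x0" if "z \<le> x0" for z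
    proof -
      have "Inf SS < ereal z" using MInf by simp
      then obtain s where "s \<in> SS" "s < ereal z" by (meson Inf_less_iff)
      then obtain x where "F0 x0 \<le> F0 x" "x < z" unfolding SS_def by auto
      hence "F0 x0 \<le> F0 z" using mono0 by (meson less_imp_le monoD order_trans)
      moreover have "F0 z \<le> F0 x0" using mono0 that by (simp add: monoD)
      ultimately show ?thesis by simp
    qed
    have "F1 x0 = 0"
    proof (rule ccontr)
      assume "F1 x0 \<noteq> 0"
      hence "F1 x0 > 0" using nn1 by (simp add: order_less_le)
      then obtain x where x: "F1 x < F1 x0" using bot1 by blast
      have "F1 (min x x0) \<le> F1 x" using mono1 by (simp add: monoD)
      moreover have "F1 (min x x0) = F1 x0" using tr all[of "min x x0"] by simp
      ultimately show False using x by simp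
    qed
    thus ?thesis using q MInf by (simp add: cdf_ext_def)
  next
    case (real r)
    have rx: "r \<le> x0" using le real by simp
    have "F0 x0 \<le> F0 r"
    proof (rule ccontr)
      assume "\<not> F0 x0 \<le> F0 r"
      hence gap: "F0 x0 - F0 r > 0" by simp
      have "isCont F0 r" using cont0 by (simp add: continuous_on_eq_continuous_at)
      then obtain d where d: "d > 0" "\<forall>z. dist z r < d \<longrightarrow> dist (F0 z) (F0 r) < F0 x0 - F0 r"
        using gap by (metis continuous_at_eps_delta)
      have "Inf SS < ereal (r + d)" using real d by simp
      then obtain s where "s \<in> SS" "s < ereal (r + d)" by (meson Inf_less_iff)
      then obtain x where x: "F0 x0 \<le> F0 x" "x < r + d" "ereal x \<in> SS" unfolding SS_def by auto
      have "ereal r \<le> ereal x" using x(3) real by (metis Inf_lower)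
      hence "dist x r < d" using x(2) by (simp add: dist_real_def)
      hence "F0 x - F0 r < F0 x0 - F0 r" using d by (auto simp: dist_real_def)
      thus False using x(1) by simp
    qed
    moreover have "F0 r \<le> F0 x0" using mono0 rx by (simp add: monoD)
    ultimately have "F1 r = F1 x0" using tr rx by (metis antisym)
    thus ?thesis using q real by (simp add: cdf_ext_def)
  qed
qed

lemma cic_one:
  fixes F0 F1 :: "real \<Rightarrow> real"
  assumes mono0: "mono F0" and cont0: "continuous_on UNIV F0" and le0: "\<forall>x. F0 x \<le> 1"
    and mono1: "mono F1" and nn1: "\<forall>x. F1 x \<ge> 0" and bot1: "\<forall>e>0. \<exists>x. F1 x < e"
    and top1: "\<forall>e>0. \<exists>x. F1 x > 1 - e" and le1: "\<forall>x. F1 x \<le> 1"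
    and tr: "\<forall>x1 x2. x1 \<le> x2 \<and> F0 x1 = F0 x2 \<longrightarrow> F1 x1 = F1 x2"
  shows "cdf_ext F1 (qinv F0 1) = 1"
proof (cases "\<exists>x0. F0 x0 = 1")
  case True
  then obtain x0 where x0: "F0 x0 = 1" by blast
  have c: "cdf_ext F1 (qinv F0 1) = F1 x0"
    using cic_core[OF mono0 cont0 mono1 nn1 bot1 tr, of x0] x0 by simp
  have all0: "F0 z = F0 x0" if "x0 \<le> z" for z
  proof -
    have "F0 x0 \<le> F0 z" using mono0 that by (simp add: monoD)
    moreover have "F0 z \<le> 1" using le0 by blast
    ultimately show "F0 z = F0 x0" using x0 by linarith
  qed
  have all: "F1 z = F1 x0" if "x0 \<le> z" for z
    using tr that all0[OF that] by metis
  have "F1 x0 = 1"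
  proof (rule ccontr)
    assume "F1 x0 \<noteq> 1"
    moreover have "F1 x0 \<le> 1" using le1 by blast
    ultimately have "1 - F1 x0 > 0" by linarith
    then obtain x where "F1 x > 1 - (1 - F1 x0)" using top1 by blast
    hence x: "F1 x > F1 x0" by simp
    have "F1 x \<le> F1 (max x x0)" using mono1 by (simp add: monoD)
    moreover have "F1 (max x x0) = F1 x0" using all[of "max x x0"] by simp
    ultimately show False using x by simp
  qed
  thus ?thesis using c by simp
next
  case False
  have "\<not> 1 \<le> F0 x" for x using False le0 by (metis order_antisym)
  hence "{ereal x | x. 1 \<le> F0 x} = {}" by auto
  hence "qinv F0 1 = PInfty" unfolding qinv_def by (simp add: top_ereal_def)
  thus ?thesis by (simp add: cdf_ext_def)
qed

lemma csupp_null: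
  fixes X :: "'a \<Rightarrow> real"
  assumes P: "prob_space M" and A: "A \<in> sets M" and X: "X \<in> borel_measurable M"
    and Opn: "open Opn" and dis: "Opn \<inter> csupp M X A = {}"
  shows "measure M {\<omega>\<in>A. X \<omega> \<in> Opn} = 0"
proof -
  interpret prob_space M by fact
  define FF where "FF = {ball x e | x e. e > 0 \<and> measure M {\<omega>\<in>A. X \<omega> \<in> ball x e} = 0 \<and> ball x e \<subseteq> Opn}"
  have cov: "\<Union>FF = Opn"
  proof
    show "\<Union>FF \<subseteq> Opn" unfolding FF_def by auto
  next
    show "Opn \<subseteq> \<Union>FF"
    proof
      fix x assume xO: "x \<in> Opn"
      hence "x \<notin> csupp M X A" using dis by auto
      then obtain e where e: "e > 0" "\<not> measure M {\<omega>\<in>A. X \<omega> \<in> ball x e} > 0"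
        unfolding csupp_def by auto
      hence e0: "measure M {\<omega>\<in>A. X \<omega> \<in> ball x e} = 0" by (simp add: order_less_le)
      obtain r where r: "r > 0" "ball x r \<subseteq> Opn" using Opn xO open_contains_ball by blast
      define e' where "e' = min e r"
      have "ball x e' \<subseteq> ball x e" "ball x e' \<subseteq> Opn" using r unfolding e'_def by auto
      have "measure M {\<omega>\<in>A. X \<omega> \<in> ball x e'} \<le> measure M {\<omega>\<in>A. X \<omega> \<in> ball x e}"
      proof (rule finite_measure_mono)
        show "{\<omega>\<in>A. X \<omega> \<in> ball x e} \<in> sets M" using sets_sub[OF A X borel_open[OF open_ball]] by blast
      qed (use \<open>ball x e' \<subseteq> ball x e\<close> in auto)
      hence "measure M {\<omega>\<in>A. X \<omega> \<in> ball x e'} = 0" using e0 by (simp add: antisym)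
      moreover have "e' > 0" using e r unfolding e'_def by simp
      ultimately have "ball x e' \<in> FF" unfolding FF_def using \<open>ball x e' \<subseteq> Opn\<close> by blast
      moreover have "x \<in> ball x e'" using \<open>e' > 0\<close> by simp
      ultimately show "x \<in> \<Union>FF" by blast
    qed
  qed
  have opn: "\<And>S. S \<in> FF \<Longrightarrow> open S" unfolding FF_def by auto
  obtain FF' where FF': "FF' \<subseteq> FF" "countable FF'" "\<Union>FF' = \<Union>FF" using Lindelof[OF opn] by blast
  have eq: "{\<omega>\<in>A. X \<omega> \<in> Opn} = (\<Union>B\<in>FF'. {\<omega>\<in>A. X \<omega> \<in> B})" using FF'(3) cov by auto
  have "(\<Union>B\<in>FF'. {\<omega>\<in>A. X \<omega> \<in> B}) \<in> null_sets M"
  proof (rule null_sets_UN'[OF FF'(2)])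
    fix B assume "B \<in> FF'"
    hence "B \<in> FF" using FF' by auto
    then obtain x e where B: "B = ball x e" "measure M {\<omega>\<in>A. X \<omega> \<in> ball x e} = 0" unfolding FF_def by auto
    have s: "{\<omega>\<in>A. X \<omega> \<in> B} \<in> sets M" unfolding B(1) using sets_sub[OF A X borel_open[OF open_ball]] by blast
    show "{\<omega>\<in>A. X \<omega> \<in> B} \<in> null_sets M"
      using s B by (simp add: emeasure_eq_measure null_setsI)
  qed
  thus ?thesis using eq by (simp add: measure_eq_0_null_sets)
qed

lemma ccdf_atom:
  fixes X :: "'a \<Rightarrow> real"
  assumes P: "prob_space M" and A: "A \<in> sets M" and X: "X \<in> borel_measurable M"
    and C: "isCont (ccdf M X A) x"
  shows "measure M {\<omega>\<in>A. X \<omega> = x} = 0"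
proof -
  interpret prob_space M by fact
  have sx: "{\<omega>\<in>A. X \<omega> = x} \<in> sets M" using sets_sub[OF A X, of "{x}"] by simp
  show ?thesis
  proof (cases "measure M A = 0")
    case True
    have "measure M {\<omega>\<in>A. X \<omega> = x} \<le> measure M A"
      by (rule finite_measure_mono) (use A in auto)
    thus ?thesis using True by (simp add: antisym)
  next
    case False
    let ?F = "ccdf M X A"
    have key: "measure M {\<omega>\<in>A. X \<omega> = x} \<le> measure M A * (?F x - ?F (x - d))" if "d > 0" for d
    proof -
      have sub: "{\<omega>\<in>A. X \<omega> \<le> x - d} \<subseteq> {\<omega>\<in>A. X \<omega> \<le> x}" using that by auto
      have "measure M {\<omega>\<in>A. X \<omega> = x} \<le> measure M ({\<omega>\<in>A. X \<omega> \<le> x} - {\<omega>\<in>A. X \<omega> \<le> x - d})"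
        by (rule finite_measure_mono) (use that sets_le[OF A X] in auto)
      also have "\<dots> = measure M {\<omega>\<in>A. X \<omega> \<le> x} - measure M {\<omega>\<in>A. X \<omega> \<le> x - d}"
        by (rule finite_measure_Diff) (use sub sets_le[OF A X] in auto)
      also have "\<dots> = measure M A * (?F x - ?F (x - d))"
        using False unfolding ccdf_def by (simp add: algebra_simps)
      finally show ?thesis .
    qed
    have l1: "(\<lambda>n. x - inverse (real (Suc n))) \<longlonglongrightarrow> x"
      using tendsto_diff[OF tendsto_const LIMSEQ_inverse_real_of_nat, of x] by simp
    have l2: "(\<lambda>n. ?F (x - inverse (real (Suc n)))) \<longlonglongrightarrow> ?F x"
      by (rule isCont_tendsto_compose[OF C l1])
    have l3: "(\<lambda>n. measure M A * (?F x - ?F (x - inverse (real (Suc n))))) \<longlonglongrightarrow> measure M A * (?F x - ?F x)"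
      by (intro tendsto_intros l2)
    have "measure M {\<omega>\<in>A. X \<omega> = x} \<le> measure M A * (?F x - ?F x)"
      by (rule LIMSEQ_le_const[OF l3]) (auto intro!: key)
    hence "measure M {\<omega>\<in>A. X \<omega> = x} \<le> 0" by simp
    thus ?thesis by (simp add: antisym)
  qed
qed

lemma cdf_transfer:
  fixes X :: "'a \<Rightarrow> real"
  assumes P: "prob_space M" and A0: "A0 \<in> sets M" and A1: "A1 \<in> sets M" and X: "X \<in> borel_measurable M"
    and supp: "csupp M X A1 = Sp" and cl: "closed Sp"
    and sm0: "strict_mono_on Sp (ccdf M X A0)"
    and cont1: "continuous_on UNIV (ccdf M X A1)"
    and le: "x1 \<le> x2" and eq: "ccdf M X A0 x1 = ccdf M X A0 x2"
  shows "ccdf M X A1 x1 = ccdf M X A1 x2"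
proof (cases "x1 = x2")
  case True thus ?thesis by simp
next
  case False
  interpret prob_space M by fact
  let ?F0 = "ccdf M X A0"
  have uniq: "a = b" if "a \<in> Sp" "b \<in> Sp" "x1 \<le> a" "a \<le> x2" "x1 \<le> b" "b \<le> x2" for a b
  proof (rule ccontr)
    have gen: False if "a \<in> Sp" "b \<in> Sp" "x1 \<le> a" "b \<le> x2" "a < b" for a b
    proof -
      have "?F0 a < ?F0 b" using sm0 that by (simp add: strict_mono_onD)
      moreover have "?F0 x1 \<le> ?F0 a" using ccdf_mono[OF P A0 X that(3)] .
      moreover have "?F0 b \<le> ?F0 x2" using ccdf_mono[OF P A0 X that(4)] .
      ultimately show False using eq by simp
    qed
    assume "a \<noteq> b"
    hence "a < b \<or> b < a" by auto
    thus False using gen that by blast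
  qed
  obtain c where c: "Sp \<inter> {x1..x2} \<subseteq> {c}"
  proof (cases "Sp \<inter> {x1..x2} = {}")
    case True thus ?thesis using that by blast
  next
    case False
    then obtain c where "c \<in> Sp \<inter> {x1..x2}" by blast
    hence "Sp \<inter> {x1..x2} \<subseteq> {c}" using uniq by auto
    thus ?thesis using that by blast
  qed
  define Opn where "Opn = {x1<..<x2} - Sp"
  have oO: "open Opn" unfolding Opn_def using cl by (simp add: open_Diff)
  have n1: "measure M {\<omega>\<in>A1. X \<omega> \<in> Opn} = 0"
    by (rule csupp_null[OF P A1 X oO]) (use supp in \<open>auto simp: Opn_def\<close>)
  have n2: "measure M {\<omega>\<in>A1. X \<omega> = c} = 0"
    by (rule ccdf_atom[OF P A1 X]) (use cont1 in \<open>simp add: continuous_on_eq_continuous_at\<close>)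
  have n3: "measure M {\<omega>\<in>A1. X \<omega> = x2} = 0"
    by (rule ccdf_atom[OF P A1 X]) (use cont1 in \<open>simp add: continuous_on_eq_continuous_at\<close>)
  have sO: "{\<omega>\<in>A1. X \<omega> \<in> Opn} \<in> sets M" using sets_sub[OF A1 X borel_open[OF oO]] .
  have sc: "{\<omega>\<in>A1. X \<omega> = c} \<in> sets M" using sets_sub[OF A1 X, of "{c}"] by simp
  have sx: "{\<omega>\<in>A1. X \<omega> = x2} \<in> sets M" using sets_sub[OF A1 X, of "{x2}"] by simp
  have sub1: "{\<omega>\<in>A1. X \<omega> \<le> x1} \<subseteq> {\<omega>\<in>A1. X \<omega> \<le> x2}" using le by auto
  have sub2: "{\<omega>\<in>A1. X \<omega> \<le> x2} - {\<omega>\<in>A1. X \<omega> \<le> x1}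
      \<subseteq> ({\<omega>\<in>A1. X \<omega> \<in> Opn} \<union> {\<omega>\<in>A1. X \<omega> = c}) \<union> {\<omega>\<in>A1. X \<omega> = x2}"
  proof
    fix \<omega> assume w: "\<omega> \<in> {\<omega>\<in>A1. X \<omega> \<le> x2} - {\<omega>\<in>A1. X \<omega> \<le> x1}"
    show "\<omega> \<in> ({\<omega>\<in>A1. X \<omega> \<in> Opn} \<union> {\<omega>\<in>A1. X \<omega> = c}) \<union> {\<omega>\<in>A1. X \<omega> = x2}"
    proof (cases "X \<omega> = x2")
      case True thus ?thesis using w by auto
    next
      case False
      hence "X \<omega> \<in> {x1<..<x2}" using w by auto
      thus ?thesis using w c unfolding Opn_def by auto
    qed
  qed
  have "measure M ({\<omega>\<in>A1. X \<omega> \<le> x2} - {\<omega>\<in>A1. X \<omega> \<le> x1})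
      \<le> measure M (({\<omega>\<in>A1. X \<omega> \<in> Opn} \<union> {\<omega>\<in>A1. X \<omega> = c}) \<union> {\<omega>\<in>A1. X \<omega> = x2})"
    by (rule finite_measure_mono[OF sub2]) (use sO sc sx in auto)
  also have "\<dots> \<le> measure M ({\<omega>\<in>A1. X \<omega> \<in> Opn} \<union> {\<omega>\<in>A1. X \<omega> = c}) + measure M {\<omega>\<in>A1. X \<omega> = x2}"
    by (rule measure_subadditive) (use sO sc sx in auto)
  also have "\<dots> \<le> measure M {\<omega>\<in>A1. X \<omega> \<in> Opn} + measure M {\<omega>\<in>A1. X \<omega> = c} + measure M {\<omega>\<in>A1. X \<omega> = x2}"
    using measure_subadditive[OF sO sc] by simp
  finally have "measure M ({\<omega>\<in>A1. X \<omega> \<le> x2} - {\<omega>\<in>A1. X \<omega> \<le> x1}) \<le> 0" using n1 n2 n3 by simp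
  moreover have "measure M ({\<omega>\<in>A1. X \<omega> \<le> x2} - {\<omega>\<in>A1. X \<omega> \<le> x1})
     = measure M {\<omega>\<in>A1. X \<omega> \<le> x2} - measure M {\<omega>\<in>A1. X \<omega> \<le> x1}"
    by (rule finite_measure_Diff) (use sub1 sets_le[OF A1 X] in auto)
  moreover have "measure M {\<omega>\<in>A1. X \<omega> \<le> x1} \<le> measure M {\<omega>\<in>A1. X \<omega> \<le> x2}"
    by (rule finite_measure_mono[OF sub1]) (use sets_le[OF A1 X] in auto)
  ultimately have "measure M {\<omega>\<in>A1. X \<omega> \<le> x1} = measure M {\<omega>\<in>A1. X \<omega> \<le> x2}" by simp
  thus ?thesis unfolding ccdf_def by simp
qed
lemma cic_zero:
  fixes F0 F1 :: "real \<Rightarrow> real"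
  assumes "\<forall>x. F0 x \<ge> 0"
  shows "cdf_ext F1 (qinv F0 0) = 0"
proof -
  have le: "qinv F0 0 \<le> ereal r" for r
    unfolding qinv_def by (rule Inf_lower) (use assms in auto)
  have "qinv F0 0 = MInfty"
  proof (cases "qinv F0 0")
    case (real s) thus ?thesis using le[of "s - 1"] by simp
  next
    case PInf thus ?thesis using le[of 0] by simp
  qed auto
  thus ?thesis by (simp add: cdf_ext_def)
qed

theorem mainTheorem5:
  fixes M :: "'a measure"
    and Ypot U :: "nat \<Rightarrow> 'a \<Rightarrow> real"
    and V :: "'a \<Rightarrow> real"
    and G T :: "'a \<Rightarrow> nat"
    and v :: "nat \<Rightarrow> nat \<Rightarrow> real"
    and h :: "nat \<Rightarrow> real \<Rightarrow> nat \<Rightarrow> real"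
    and Dp :: "nat \<Rightarrow> 'a \<Rightarrow> nat" and D :: "'a \<Rightarrow> nat" and Y :: "'a \<Rightarrow> real"
    and cell :: "nat \<Rightarrow> nat \<Rightarrow> nat \<Rightarrow> 'a set"
    and p :: "nat \<Rightarrow> nat \<Rightarrow> nat \<Rightarrow> real" and lam :: "nat \<Rightarrow> nat \<Rightarrow> real"
    and F :: "nat \<Rightarrow> nat \<Rightarrow> nat \<Rightarrow> real \<Rightarrow> real" and H :: "nat \<Rightarrow> real \<Rightarrow> real"
    and S S' :: "'a set"
  assumes Dp_def: "Dp = (\<lambda>t \<omega>. if v (G \<omega>) t \<le> V \<omega> then (1::nat) else 0)"
    and D_def: "D = (\<lambda>\<omega>. Dp (T \<omega>) \<omega>)"
    and Y_def: "Y = (\<lambda>\<omega>. if D \<omega> = 1 then Ypot 1 \<omega> else Ypot 0 \<omega>)"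
    and cell_def: "cell = (\<lambda>d g t. {\<omega> \<in> space M. D \<omega> = d \<and> G \<omega> = g \<and> T \<omega> = t})"
    and p_def: "p = (\<lambda>d g t. measure M (cell d g t) / measure M {\<omega> \<in> space M. G \<omega> = g \<and> T \<omega> = t})"
    and lam_def: "lam = (\<lambda>g d. p d g 1 / p d g 0)"
    and F_def: "F = (\<lambda>d g t. ccdf M Y (cell d g t))"
    and H_def: "H = (\<lambda>d q. cdf_ext (F d 1 0) (qinv (F d 0 0) q))"
    and S_def: "S = {\<omega> \<in> space M. Dp 0 \<omega> < Dp 1 \<omega> \<and> G \<omega> = 1}"
    and S2_def: "S' = {\<omega> \<in> space M. Dp 0 \<omega> \<noteq> Dp 1 \<omega> \<and> G \<omega> = 0}"
    and prob: "prob_space M"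
    and measV: "V \<in> borel_measurable M"
    and measY: "\<forall>d\<in>{0,1}. Ypot d \<in> borel_measurable M"
    and measU: "\<forall>d\<in>{0,1}. U d \<in> borel_measurable M"
    and measG: "G \<in> measurable M (count_space UNIV)"
    and measT: "T \<in> measurable M (count_space UNIV)"
    and binGT: "\<forall>\<omega>\<in>space M. G \<omega> \<in> {0,1} \<and> T \<omega> \<in> {0,1}"
    and A1: "\<forall>g\<in>{0,1}. \<forall>t\<in>{0,1}. \<forall>B\<in>sets borel.
        measure M {\<omega> \<in> space M. V \<omega> \<in> B \<and> T \<omega> = t \<and> G \<omega> = g} * measure M {\<omega> \<in> space M. G \<omega> = g}
      = measure M {\<omega> \<in> space M. V \<omega> \<in> B \<and> G \<omega> = g} * measure M {\<omega> \<in> space M. T \<omega> = t \<and> G \<omega> = g}"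
    and A2a: "p 1 1 1 > p 1 1 0"
    and A2b: "p 1 1 1 - p 1 1 0 > p 1 0 1 - p 1 0 0"
    and A6struct: "\<forall>d\<in>{0,1}. \<forall>\<omega>\<in>space M. Ypot d \<omega> = h d (U d \<omega>) (T \<omega>)"
    and A6mono: "\<forall>d\<in>{0,1}. \<forall>t\<in>{0,1}. strict_mono (\<lambda>u. h d u t)"
    and A6indep: "\<forall>d\<in>{0,1}. \<forall>g\<in>{0,1}. \<forall>e\<in>{0,1}. \<forall>t\<in>{0,1}. \<forall>B\<in>sets borel.
        measure M {\<omega> \<in> space M. U d \<omega> \<in> B \<and> T \<omega> = t \<and> G \<omega> = g \<and> Dp 0 \<omega> = e}
          * measure M {\<omega> \<in> space M. G \<omega> = g \<and> Dp 0 \<omega> = e}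
      = measure M {\<omega> \<in> space M. U d \<omega> \<in> B \<and> G \<omega> = g \<and> Dp 0 \<omega> = e}
          * measure M {\<omega> \<in> space M. T \<omega> = t \<and> G \<omega> = g \<and> Dp 0 \<omega> = e}"
    and A7supp: "\<forall>d\<in>{0,1}. \<forall>g\<in>{0,1}. \<forall>t\<in>{0,1}. csupp M Y (cell d g t) = csupp M Y (space M)"
    and A7int: "is_interval (csupp M Y (space M))"
    and A7closed: "closed (csupp M Y (space M))"
    and A7cdf: "\<forall>d\<in>{0,1}. \<forall>g\<in>{0,1}. \<forall>t\<in>{0,1}.
        continuous_on UNIV (F d g t) \<and> strict_mono_on (csupp M Y (space M)) (F d g t)"
    and pos: "\<forall>d\<in>{0,1}. \<forall>g\<in>{0,1}. \<forall>t\<in>{0,1}. measure M (cell d g t) > 0"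
  shows "\<forall>d\<in>{0,1}. \<forall>y. ccdf M (Ypot d) (S \<inter> {\<omega> \<in> space M. T \<omega> = 1}) y
     = (p d 1 1 * F d 1 1 y
        - p d 1 0 * H d (lam 0 d * F d 0 1 y
            + (if measure M S' = 0 then 0
               else (1 - lam 0 d) * ccdf M (Ypot d) (S' \<inter> {\<omega> \<in> space M. T \<omega> = 1}) y)))
       / (p d 1 1 - p d 1 0)"
proof (intro ballI allI)
  fix d y assume d: "d \<in> {0::nat,1}"
  interpret prob_space M by (rule prob)
  note [measurable] = measV measG measT
  have [measurable]: "Ypot 0 \<in> borel_measurable M" "Ypot 1 \<in> borel_measurable M" using measY by auto
  have [measurable]: "Ypot d \<in> borel_measurable M" "U d \<in> borel_measurable M" using measY measU d by auto
  have [measurable]: "(\<lambda>\<omega>. v (G \<omega>) s) \<in> borel_measurable M" for s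
    using measurable_compose[OF measG, of "\<lambda>g. v g s" borel] by simp
  have mDp[measurable]: "Dp s \<in> measurable M (count_space UNIV)" for s
    unfolding Dp_def by measurable
  have mD[measurable]: "D \<in> measurable M (count_space UNIV)"
    unfolding D_def by measurable
  have mY[measurable]: "Y \<in> borel_measurable M"
    unfolding Y_def by measurable
  have sA: "{\<omega>\<in>space M. G \<omega> = g \<and> T \<omega> = t \<and> Dp 0 \<omega> = e} \<in> sets M" for g t e
    by measurable
  have Dp01: "Dp s \<omega> = 0 \<or> Dp s \<omega> = 1" for s \<omega> unfolding Dp_def by auto
  have SWeq: "S \<inter> {\<omega>\<in>space M. T \<omega> = 1} = {\<omega>\<in>space M. Dp 0 \<omega> = 0 \<and> Dp 1 \<omega> = 1 \<and> G \<omega> = 1 \<and> T \<omega> = 1}"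
  proof -
    have lt: "Dp 0 \<omega> < Dp 1 \<omega> \<longleftrightarrow> Dp 0 \<omega> = 0 \<and> Dp 1 \<omega> = 1" for \<omega>
      using Dp01[of 0 \<omega>] Dp01[of 1 \<omega>] by auto
    show ?thesis unfolding S_def using lt by auto
  qed
  have S'Weq: "S' \<inter> {\<omega>\<in>space M. T \<omega> = 1} = {\<omega>\<in>space M. (Dp 0 \<omega> = 0 \<and> Dp 1 \<omega> = 1 \<or> Dp 0 \<omega> = 1 \<and> Dp 1 \<omega> = 0) \<and> G \<omega> = 0 \<and> T \<omega> = 1}"
  proof -
    have ne: "Dp 0 \<omega> \<noteq> Dp 1 \<omega> \<longleftrightarrow> (Dp 0 \<omega> = 0 \<and> Dp 1 \<omega> = 1 \<or> Dp 0 \<omega> = 1 \<and> Dp 1 \<omega> = 0)" for \<omega>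
      using Dp01[of 0 \<omega>] Dp01[of 1 \<omega>] by auto
    show ?thesis unfolding S2_def using ne by auto
  qed
  have sS: "S \<inter> {\<omega>\<in>space M. T \<omega> = 1} \<in> sets M" "S' \<inter> {\<omega>\<in>space M. T \<omega> = 1} \<in> sets M"
  proof -
    have pre: "Dp s -` {e} \<inter> space M \<in> sets M" for s e by (rule measurable_sets[OF mDp]) simp
    have e1: "{\<omega>\<in>space M. Dp 0 \<omega> = 0 \<and> Dp 1 \<omega> = 1 \<and> G \<omega> = 1 \<and> T \<omega> = 1}
       = {\<omega>\<in>space M. G \<omega> = 1 \<and> T \<omega> = 1 \<and> Dp 0 \<omega> = 0} \<inter> (Dp 1 -` {1} \<inter> space M)" by auto
    have e2: "{\<omega>\<in>space M. (Dp 0 \<omega> = 0 \<and> Dp 1 \<omega> = 1 \<or> Dp 0 \<omega> = 1 \<and> Dp 1 \<omega> = 0) \<and> G \<omega> = 0 \<and> T \<omega> = 1}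
       = ({\<omega>\<in>space M. G \<omega> = 0 \<and> T \<omega> = 1 \<and> Dp 0 \<omega> = 0} \<inter> (Dp 1 -` {1} \<inter> space M))
         \<union> ({\<omega>\<in>space M. G \<omega> = 0 \<and> T \<omega> = 1 \<and> Dp 0 \<omega> = 1} \<inter> (Dp 1 -` {0} \<inter> space M))" by auto
    show "S \<inter> {\<omega>\<in>space M. T \<omega> = 1} \<in> sets M" unfolding SWeq e1 by (rule sets.Int[OF sA pre])
    show "S' \<inter> {\<omega>\<in>space M. T \<omega> = 1} \<in> sets M" unfolding S'Weq e2 by (rule sets.Un[OF sets.Int[OF sA pre] sets.Int[OF sA pre]])
  qed
  have scell: "cell e g t \<in> sets M" for e g t unfolding cell_def by measurable

  have Y_cell: "Y \<omega> = Ypot e \<omega>" if "\<omega> \<in> cell e g t" "e \<in> {0,1}" for \<omega> e g t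
    using that unfolding cell_def Y_def by auto
  have struct: "Ypot d \<omega> = h d (U d \<omega>) (T \<omega>)" if "\<omega> \<in> space M" for \<omega>
    using A6struct d that by auto
  have sm0: "strict_mono (\<lambda>u. h d u 0)" and sm1: "strict_mono (\<lambda>u. h d u 1)" using A6mono d by auto
  define Ad where "Ad e g t = {\<omega>\<in>space M. G \<omega> = g \<and> T \<omega> = t \<and> Dp 0 \<omega> = e}" for e g t
  define W where "W g t = {\<omega>\<in>space M. G \<omega> = g \<and> T \<omega> = t}" for g t
  have sW: "W g t \<in> sets M" for g t unfolding W_def by measurable
  have sAd: "Ad e g t \<in> sets M" for e g t unfolding Ad_def by (rule sA)
  have cell0: "cell e g 0 = Ad e g 0" for e g unfolding cell_def Ad_def D_def by auto
  have posC: "measure M (cell e g t) > 0" if "e \<in> {0,1}" "g \<in> {0,1}" "t \<in> {0,1}" for e g t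
    using pos that by blast
  have posW: "measure M (W g t) > 0" if "g \<in> {0,1}" "t \<in> {0,1}" for g t
  proof -
    have "cell 0 g t \<subseteq> W g t" unfolding cell_def W_def by auto
    hence "measure M (cell 0 g t) \<le> measure M (W g t)" using sW scell by (simp add: finite_measure_mono)
    moreover have "measure M (cell 0 g t) > 0" using posC[of 0 g t] that by simp
    ultimately show ?thesis by linarith
  qed
  have pW: "p e g t = measure M (cell e g t) / measure M (W g t)" for e g t unfolding p_def W_def by simp
  have F2: "measure M (Ad e g 0) / measure M (W g 0) = measure M (Ad e g 1) / measure M (W g 1)
      \<and> measure M (Ad e g 1) > 0"
    if e: "e \<in> {0,1}" and g: "g \<in> {0,1}" for e g
  proof -
    define B where "B = (if e = 1 then {v g 0..} else {..<v g 0})"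
    have Bb: "B \<in> sets borel" unfolding B_def by auto
    have AdV: "Ad e g t = {\<omega>\<in>space M. V \<omega> \<in> B \<and> T \<omega> = t \<and> G \<omega> = g}" for t
      unfolding Ad_def B_def Dp_def using e by (auto split: if_splits)
    have WT: "W g t = {\<omega>\<in>space M. T \<omega> = t \<and> G \<omega> = g}" for t unfolding W_def by auto
    define VG where "VG = {\<omega>\<in>space M. V \<omega> \<in> B \<and> G \<omega> = g}"
    define GG where "GG = {\<omega>\<in>space M. G \<omega> = g}"
    have sVG: "VG \<in> sets M" unfolding VG_def using Bb by measurable
    have sGG: "GG \<in> sets M" unfolding GG_def by measurable
    have eqt: "measure M (Ad e g t) * measure M GG = measure M VG * measure M (W g t)" if t: "t \<in> {0,1}" for t
    proof -
      have "measure M {\<omega>\<in>space M. V \<omega> \<in> B \<and> T \<omega> = t \<and> G \<omega> = g} * measure M {\<omega>\<in>space M. G \<omega> = g}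
        = measure M {\<omega>\<in>space M. V \<omega> \<in> B \<and> G \<omega> = g} * measure M {\<omega>\<in>space M. T \<omega> = t \<and> G \<omega> = g}"
        using A1 g Bb t by blast
      thus ?thesis unfolding AdV WT VG_def GG_def .
    qed
    have "W g 0 \<subseteq> GG" unfolding W_def GG_def by auto
    hence "measure M (W g 0) \<le> measure M GG" using sW sGG by (simp add: finite_measure_mono)
    hence pGG: "measure M GG > 0" using posW[of g 0] g by simp
    have r: "measure M (Ad e g t) / measure M (W g t) = measure M VG / measure M GG" if t: "t \<in> {0,1}" for t
    proof -
      have "measure M (W g t) \<noteq> 0" using posW[of g t] g t by simp
      thus ?thesis using eqt[OF t] pGG by (simp add: frac_eq_eq)
    qed
    have "Ad e g 0 \<subseteq> VG" unfolding AdV VG_def by auto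
    hence "measure M (Ad e g 0) \<le> measure M VG" using sAd sVG by (simp add: finite_measure_mono)
    moreover have "measure M (Ad e g 0) > 0" using posC[of e g 0] e g cell0 by simp
    ultimately have pVG: "measure M VG > 0" by simp
    have "measure M (Ad e g 1) = measure M VG / measure M GG * measure M (W g 1)"
      using r[of 1] posW[of g 1] g by (simp add: field_simps)
    hence "measure M (Ad e g 1) > 0" using pVG pGG posW[of g 1] g by simp
    thus ?thesis using r[of 0] r[of 1] by simp
  qed
  have v1: "v 1 1 \<le> v 1 0"
  proof (rule ccontr)
    assume nv: "\<not> v 1 1 \<le> v 1 0"
    have "cell 1 1 1 \<subseteq> Ad 1 1 1" unfolding cell_def Ad_def D_def Dp_def using nv by (auto split: if_splits)
    hence "measure M (cell 1 1 1) \<le> measure M (Ad 1 1 1)" using scell sAd by (simp add: finite_measure_mono)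
    hence "p 1 1 1 \<le> measure M (Ad 1 1 1) / measure M (W 1 1)" unfolding pW using posW[of 1 1]
      by (simp add: divide_right_mono)
    also have "\<dots> = p 1 1 0" using F2[of 1 1] cell0 pW by simp
    finally show False using A2a by simp
  qed
  have indep: "measure M {\<omega>\<in>space M. U d \<omega> \<in> X \<and> T \<omega> = 1 \<and> G \<omega> = g \<and> Dp 0 \<omega> = d} / measure M (Ad d g 1)
      = measure M {\<omega>\<in>space M. U d \<omega> \<in> X \<and> T \<omega> = 0 \<and> G \<omega> = g \<and> Dp 0 \<omega> = d} / measure M (Ad d g 0)"
    if g: "g \<in> {0,1}" and X: "X \<in> sets borel" for g X
  proof -
    define GD where "GD = {\<omega>\<in>space M. G \<omega> = g \<and> Dp 0 \<omega> = d}"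
    define UGD where "UGD = {\<omega>\<in>space M. U d \<omega> \<in> X \<and> G \<omega> = g \<and> Dp 0 \<omega> = d}"
    have sGD: "GD \<in> sets M" unfolding GD_def by measurable
    have AT: "Ad d g t = {\<omega>\<in>space M. T \<omega> = t \<and> G \<omega> = g \<and> Dp 0 \<omega> = d}" for t unfolding Ad_def by auto
    have e: "measure M {\<omega>\<in>space M. U d \<omega> \<in> X \<and> T \<omega> = t \<and> G \<omega> = g \<and> Dp 0 \<omega> = d} * measure M GD
        = measure M UGD * measure M (Ad d g t)" if t: "t \<in> {0,1}" for t
      unfolding GD_def UGD_def AT using A6indep d g X t by blast
    have p0: "measure M (Ad d g 0) > 0" using posC[of d g 0] d g cell0 by simp
    have p1: "measure M (Ad d g 1) > 0" using F2 d g by blast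
    have "Ad d g 0 \<subseteq> GD" unfolding Ad_def GD_def by auto
    hence "measure M (Ad d g 0) \<le> measure M GD" using sAd sGD by (simp add: finite_measure_mono)
    hence pGD: "measure M GD > 0" using p0 by simp
    have r: "measure M {\<omega>\<in>space M. U d \<omega> \<in> X \<and> T \<omega> = t \<and> G \<omega> = g \<and> Dp 0 \<omega> = d} / measure M (Ad d g t)
        = measure M UGD / measure M GD" if "t \<in> {0,1}" "measure M (Ad d g t) > 0" for t
      using e[OF that(1)] that(2) pGD by (simp add: frac_eq_eq)
    show ?thesis using r[of 1] r[of 0] p0 p1 by simp
  qed
  have contF: "continuous_on UNIV (ccdf M Y (cell e g t))" and smF: "strict_mono_on (csupp M Y (space M)) (ccdf M Y (cell e g t))"
    if "e \<in> {0,1}" "g \<in> {0,1}" "t \<in> {0,1}" for e g t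
    using A7cdf that unfolding F_def by auto
  have Fcell: "F d g 0 x = measure M {\<omega>\<in>space M. U d \<omega> \<in> {u. h d u 0 \<le> x} \<and> T \<omega> = 0 \<and> G \<omega> = g \<and> Dp 0 \<omega> = d}
      / measure M (Ad d g 0)" for g x
  proof -
    have "{\<omega>\<in>cell d g 0. Y \<omega> \<le> x} = {\<omega>\<in>space M. U d \<omega> \<in> {u. h d u 0 \<le> x} \<and> T \<omega> = 0 \<and> G \<omega> = g \<and> Dp 0 \<omega> = d}"
      (is "?L = ?R")
    proof (rule set_eqI)
      fix \<omega>
      show "\<omega> \<in> ?L \<longleftrightarrow> \<omega> \<in> ?R"
      proof (cases "\<omega> \<in> cell d g 0")
        case True
        hence "Y \<omega> = Ypot d \<omega>" using Y_cell d by blast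
        moreover have "Ypot d \<omega> = h d (U d \<omega>) 0" using struct True unfolding cell_def by auto
        ultimately show ?thesis using True unfolding cell0 Ad_def by auto
      next
        case False thus ?thesis unfolding cell0 Ad_def by auto
      qed
    qed
    thus ?thesis unfolding F_def ccdf_def by (simp add: cell0)
  qed
  define K where "K g = measure M {\<omega>\<in>Ad d g 1. Ypot d \<omega> \<le> y} / measure M (Ad d g 1)" for g
  define Dy where "Dy = {u. h d u 1 \<le> y}"
  define mu where "mu g t X = measure M {\<omega>\<in>space M. U d \<omega> \<in> X \<and> T \<omega> = t \<and> G \<omega> = g \<and> Dp 0 \<omega> = d}" for g t X
  have Kmu: "K g = mu g 1 Dy / measure M (Ad d g 1)" for g
  proof -
    have "{\<omega>\<in>Ad d g 1. Ypot d \<omega> \<le> y} = {\<omega>\<in>space M. U d \<omega> \<in> Dy \<and> T \<omega> = 1 \<and> G \<omega> = g \<and> Dp 0 \<omega> = d}"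
      unfolding Ad_def Dy_def using struct by auto
    thus ?thesis unfolding K_def mu_def by simp
  qed
  have down: "u \<in> Dy" if "u \<le> w" "w \<in> Dy" for u w
  proof -
    have "h d u 1 \<le> h d w 1" using monoD[OF strict_mono_mono[OF sm1] that(1)] by simp
    thus ?thesis using that(2) unfolding Dy_def by simp
  qed
  have Dycases: "Dy = {} \<or> Dy = UNIV \<or> (\<exists>a. Dy = {..<a} \<or> Dy = {..a})"
  proof -
    { assume ne: "Dy \<noteq> {}" and nu: "Dy \<noteq> UNIV"
      obtain w where w: "w \<notin> Dy" using nu by blast
      have bdd: "bdd_above Dy"
      proof (rule bdd_aboveI)
        fix u assume "u \<in> Dy"
        show "u \<le> w"
        proof (rule ccontr)
          assume "\<not> u \<le> w"
          hence "w \<le> u" by simp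
          thus False using down \<open>u \<in> Dy\<close> w by blast
        qed
      qed
      define a where "a = Sup Dy"
      have lt: "{..<a} \<subseteq> Dy"
      proof
        fix u assume "u \<in> {..<a}"
        hence "u < Sup Dy" unfolding a_def by simp
        then obtain z where "z \<in> Dy" "u < z" using less_cSup_iff[OF ne bdd] by blast
        thus "u \<in> Dy" using down[of u z] by simp
      qed
      have le: "Dy \<subseteq> {..a}" using cSup_upper[OF _ bdd] unfolding a_def by auto
      have "Dy = {..<a} \<or> Dy = {..a}"
      proof (cases "a \<in> Dy")
        case True
        have "{..a} \<subseteq> Dy"
        proof
          fix u assume "u \<in> {..a}"
          thus "u \<in> Dy" using lt True by (cases "u = a") auto
        qed
        thus ?thesis using le by blast
      next
        case False
        have "Dy \<subseteq> {..<a}"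
        proof
          fix u assume u: "u \<in> Dy"
          hence "u \<le> a" "u \<noteq> a" using le False by auto
          thus "u \<in> {..<a}" by simp
        qed
        thus ?thesis using lt by blast
      qed
      hence ?thesis by blast }
    thus ?thesis by blast
  qed
  have Kmu0: "K g = mu g 0 Dy / measure M (Ad d g 0)" if g: "g \<in> {0,1}" and Db: "Dy \<in> sets borel" for g
    using Kmu[of g] indep[OF g Db] unfolding mu_def by simp
  have atom: "mu g 0 {a} = 0" if g: "g \<in> {0,1}" for g a
  proof -
    have cont: "isCont (ccdf M Y (cell d g 0)) (h d a 0)" using contF[of d g 0] d g
      by (simp add: continuous_on_eq_continuous_at)
    have z: "measure M {\<omega>\<in>cell d g 0. Y \<omega> = h d a 0} = 0" by (rule ccdf_atom[OF prob scell mY cont])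
    have sub: "{\<omega>\<in>space M. U d \<omega> \<in> {a} \<and> T \<omega> = 0 \<and> G \<omega> = g \<and> Dp 0 \<omega> = d} \<subseteq> {\<omega>\<in>cell d g 0. Y \<omega> = h d a 0}"
    proof
      fix \<omega> assume w: "\<omega> \<in> {\<omega>\<in>space M. U d \<omega> \<in> {a} \<and> T \<omega> = 0 \<and> G \<omega> = g \<and> Dp 0 \<omega> = d}"
      hence c: "\<omega> \<in> cell d g 0" unfolding cell0 Ad_def by auto
      hence "Y \<omega> = Ypot d \<omega>" using Y_cell d by blast
      also have "\<dots> = h d a 0" using struct w by auto
      finally show "\<omega> \<in> {\<omega>\<in>cell d g 0. Y \<omega> = h d a 0}" using c by simp
    qed
    have "mu g 0 {a} \<le> measure M {\<omega>\<in>cell d g 0. Y \<omega> = h d a 0}"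
      unfolding mu_def by (rule finite_measure_mono[OF sub]) (use sets_sub[OF scell mY, of "{h d a 0}"] in simp)
    moreover have "mu g 0 {a} \<ge> 0" unfolding mu_def by simp
    ultimately show ?thesis using z by simp
  qed
  have hdown: "{u. h d u 0 \<le> h d a 0} = {..a}" for a by (auto simp: strict_mono_less_eq[OF sm0])
  have Fa: "F d g 0 (h d a 0) = mu g 0 {..a} / measure M (Ad d g 0)" for g a
    using Fcell[of g "h d a 0"] unfolding hdown mu_def .
  have mu_lt: "mu g 0 {..<a} = mu g 0 {..a}" if g: "g \<in> {0,1}" for g a
  proof -
    have eq: "{\<omega>\<in>space M. U d \<omega> \<in> {..a} \<and> T \<omega> = 0 \<and> G \<omega> = g \<and> Dp 0 \<omega> = d}
      = {\<omega>\<in>space M. U d \<omega> \<in> {..<a} \<and> T \<omega> = 0 \<and> G \<omega> = g \<and> Dp 0 \<omega> = d}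
        \<union> {\<omega>\<in>space M. U d \<omega> \<in> {a} \<and> T \<omega> = 0 \<and> G \<omega> = g \<and> Dp 0 \<omega> = d}" by auto
    have "mu g 0 {..a} = mu g 0 {..<a} + mu g 0 {a}"
      unfolding mu_def eq by (rule finite_measure_Union) (measurable, auto)
    thus ?thesis using atom[OF g] by simp
  qed
  have mono0: "mono (F d 0 0)" and mono1: "mono (F d 1 0)"
    unfolding F_def by (auto intro!: monoI ccdf_mono[OF prob scell mY])
  have cont0: "continuous_on UNIV (F d 0 0)" using contF[of d 0 0] d unfolding F_def by simp
  have nn0: "\<forall>x. F d 0 0 x \<ge> 0" and nn1: "\<forall>x. F d 1 0 x \<ge> 0" unfolding F_def by (simp_all add: ccdf_nonneg)
  have le0: "\<forall>x. F d 0 0 x \<le> 1" and le1: "\<forall>x. F d 1 0 x \<le> 1"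
    unfolding F_def by (simp_all add: ccdf_le1[OF prob scell mY])
  have bot1: "\<forall>e>0. \<exists>x. F d 1 0 x < e" unfolding F_def using ccdf_lim_bot[OF prob scell mY] by blast
  have top1: "\<forall>e>0. \<exists>x. F d 1 0 x > 1 - e" unfolding F_def
    using ccdf_lim_top[OF prob scell mY] posC[of d 1 0] d by blast
  have tr: "\<forall>x1 x2. x1 \<le> x2 \<and> F d 0 0 x1 = F d 0 0 x2 \<longrightarrow> F d 1 0 x1 = F d 1 0 x2"
  proof (intro allI impI)
    fix x1 x2 assume a: "x1 \<le> x2 \<and> F d 0 0 x1 = F d 0 0 x2"
    have supp: "csupp M Y (cell d 1 0) = csupp M Y (space M)" using A7supp d by auto
    show "F d 1 0 x1 = F d 1 0 x2" unfolding F_def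
      by (rule cdf_transfer[OF prob scell scell mY supp A7closed smF[of d 0 0] contF[of d 1 0]])
         (use a d in \<open>auto simp: F_def\<close>)
  qed
  have CIC: "K 1 = H d (K 0)"
  proof -
    have HK: "H d q = cdf_ext (F d 1 0) (qinv (F d 0 0) q)" for q unfolding H_def by simp
    have pA0: "measure M (Ad d g 0) > 0" if "g \<in> {0,1}" for g using posC[of d g 0] d that cell0 by simp
    consider "Dy = {}" | "Dy = UNIV" | a where "Dy = {..<a} \<or> Dy = {..a}" using Dycases by blast
    thus ?thesis
    proof cases
      case 1
      have "K g = 0" if "g \<in> {0,1}" for g using Kmu0[OF that] 1 unfolding mu_def by simp
      thus ?thesis using cic_zero[OF nn0, of "F d 1 0"] HK by simp
    next
      case 2
      have "K g = 1" if g: "g \<in> {0,1}" for g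
      proof -
        have "{\<omega>\<in>space M. U d \<omega> \<in> UNIV \<and> T \<omega> = 0 \<and> G \<omega> = g \<and> Dp 0 \<omega> = d} = Ad d g 0"
          unfolding Ad_def by auto
        hence "mu g 0 Dy = measure M (Ad d g 0)" unfolding mu_def 2 by simp
        thus ?thesis using Kmu0[OF g] 2 pA0[OF g] by simp
      qed
      thus ?thesis using cic_one[OF mono0 cont0 le0 mono1 nn1 bot1 top1 le1 tr] HK by simp
    next
      case 3
      have Db: "Dy \<in> sets borel" using 3 by auto
      have "K g = F d g 0 (h d a 0)" if g: "g \<in> {0,1}" for g
      proof -
        have "mu g 0 Dy = mu g 0 {..a}" using 3 mu_lt[OF g] by auto
        thus ?thesis using Kmu0[OF g Db] Fa by simp
      qed
      thus ?thesis using cic_core[OF mono0 cont0 mono1 nn1 bot1 tr, of "h d a 0"] HK by simp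
    qed
  qed
  define SW where "SW = S \<inter> {\<omega> \<in> space M. T \<omega> = 1}"
  define S'W where "S'W = S' \<inter> {\<omega> \<in> space M. T \<omega> = 1}"
  define Py where "Py Z = measure M {\<omega>\<in>Z. Ypot d \<omega> \<le> y}" for Z
  have sSW: "SW \<in> sets M" and sS'W: "S'W \<in> sets M" using sS unfolding SW_def S'W_def by auto
  have Un_add: "measure M (Z1 \<union> Z2) = measure M Z1 + measure M Z2 \<and> Py (Z1 \<union> Z2) = Py Z1 + Py Z2"
    if "Z1 \<in> sets M" "Z2 \<in> sets M" "Z1 \<inter> Z2 = {}" for Z1 Z2
  proof
    show "measure M (Z1 \<union> Z2) = measure M Z1 + measure M Z2" using that by (simp add: finite_measure_Union)
    have e: "{\<omega>\<in>Z1 \<union> Z2. Ypot d \<omega> \<le> y} = {\<omega>\<in>Z1. Ypot d \<omega> \<le> y} \<union> {\<omega>\<in>Z2. Ypot d \<omega> \<le> y}" by auto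
    show "Py (Z1 \<union> Z2) = Py Z1 + Py Z2" unfolding Py_def e
      by (rule finite_measure_Union) (use that sets_le[OF that(1), of "Ypot d"] sets_le[OF that(2), of "Ypot d"] in auto)
  qed
  have Py_le: "Py Z \<le> measure M Z" if "Z \<in> sets M" for Z
    unfolding Py_def by (rule finite_measure_mono) (use that in auto)
  have Py_nn: "Py Z \<ge> 0" for Z unfolding Py_def by simp
  have mult_cc: "measure M Z * (Py Z / measure M Z) = Py Z" if "Z \<in> sets M" for Z
  proof (cases "measure M Z = 0")
    case True thus ?thesis using Py_le[OF that] Py_nn[of Z] by simp
  qed simp
  have FC: "F d g 1 y = Py (cell d g 1) / measure M (cell d g 1)" for g
  proof -
    have "{\<omega>\<in>cell d g 1. Y \<omega> \<le> y} = {\<omega>\<in>cell d g 1. Ypot d \<omega> \<le> y}" using Y_cell[of _ d g 1] d by auto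
    thus ?thesis unfolding F_def ccdf_def Py_def by simp
  qed
  have KPy: "K g = Py (Ad d g 1) / measure M (Ad d g 1)" for g unfolding K_def Py_def ..
  have posA: "measure M (Ad d g 1) > 0" if "g \<in> {0,1}" for g using F2 d that by blast
  have p1: "p d g 1 = measure M (cell d g 1) / measure M (W g 1)" for g using pW .
  have p0: "p d g 0 = measure M (Ad d g 1) / measure M (W g 1)" if "g \<in> {0,1}" for g
    using pW[of d g 0] F2[of d g] d that cell0 by simp
  have imp1: "Dp 1 \<omega> = 1" if "G \<omega> = 1" "Dp 0 \<omega> = 1" for \<omega>
  proof -
    have "v 1 0 \<le> V \<omega>" using that unfolding Dp_def by (cases "v (G \<omega>) 0 \<le> V \<omega>") simp_all
    hence "v 1 1 \<le> V \<omega>" using v1 by linarith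
    thus ?thesis using that(1) unfolding Dp_def by simp
  qed
  have SWe: "SW = {\<omega>\<in>space M. Dp 0 \<omega> = 0 \<and> Dp 1 \<omega> = 1 \<and> G \<omega> = 1 \<and> T \<omega> = 1}" unfolding SW_def SWeq ..
  have cell1e: "cell e g 1 = {\<omega>\<in>space M. G \<omega> = g \<and> T \<omega> = 1 \<and> Dp 1 \<omega> = e}" for e g
    unfolding cell_def D_def by auto
  have dec1: "(cell d 1 1 = Ad d 1 1 \<union> SW \<and> Ad d 1 1 \<inter> SW = {}) \<or> (Ad d 1 1 = cell d 1 1 \<union> SW \<and> cell d 1 1 \<inter> SW = {})"
  proof (cases "d = 1")
    case True
    have "cell d 1 1 = Ad d 1 1 \<union> SW"
    proof (rule set_eqI)
      fix \<omega>
      show "\<omega> \<in> cell d 1 1 \<longleftrightarrow> \<omega> \<in> Ad d 1 1 \<union> SW" unfolding True cell1e Ad_def SWe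
        using imp1[of \<omega>] Dp01[of 0 \<omega>] Dp01[of 1 \<omega>] by auto
    qed
    moreover have "Ad d 1 1 \<inter> SW = {}" unfolding True Ad_def SWe by auto
    ultimately show ?thesis by blast
  next
    case False
    hence d0: "d = 0" using d by auto
    have "Ad d 1 1 = cell d 1 1 \<union> SW"
    proof (rule set_eqI)
      fix \<omega>
      show "\<omega> \<in> Ad d 1 1 \<longleftrightarrow> \<omega> \<in> cell d 1 1 \<union> SW" unfolding d0 cell1e Ad_def SWe
        using imp1[of \<omega>] Dp01[of 0 \<omega>] Dp01[of 1 \<omega>] by auto
    qed
    moreover have "cell d 1 1 \<inter> SW = {}" unfolding d0 cell1e SWe by auto
    ultimately show ?thesis by blast
  qed
  have S'We: "S'W = {\<omega>\<in>space M. (Dp 0 \<omega> = 0 \<and> Dp 1 \<omega> = 1 \<or> Dp 0 \<omega> = 1 \<and> Dp 1 \<omega> = 0) \<and> G \<omega> = 0 \<and> T \<omega> = 1}"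
    unfolding S'W_def S'Weq ..
  have dec0: "(cell d 0 1 = Ad d 0 1 \<union> S'W \<and> Ad d 0 1 \<inter> S'W = {}) \<or> (Ad d 0 1 = cell d 0 1 \<union> S'W \<and> cell d 0 1 \<inter> S'W = {})"
  proof (cases "v 0 1 \<le> v 0 0")
    case True
    have imp: "Dp 1 \<omega> = 1" if "G \<omega> = 0" "Dp 0 \<omega> = 1" for \<omega>
    proof -
      have "v 0 0 \<le> V \<omega>" using that unfolding Dp_def by (cases "v (G \<omega>) 0 \<le> V \<omega>") simp_all
      hence "v 0 1 \<le> V \<omega>" using True by linarith
      thus ?thesis using that(1) unfolding Dp_def by simp
    qed
    show ?thesis
    proof (cases "d = 1")
      case d1: True
      have "cell d 0 1 = Ad d 0 1 \<union> S'W"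
      proof (rule set_eqI)
        fix \<omega>
        show "\<omega> \<in> cell d 0 1 \<longleftrightarrow> \<omega> \<in> Ad d 0 1 \<union> S'W" unfolding d1 cell1e Ad_def S'We
          using imp[of \<omega>] Dp01[of 0 \<omega>] Dp01[of 1 \<omega>] by auto
      qed
      moreover have "Ad d 0 1 \<inter> S'W = {}"
      proof -
        { fix \<omega> assume "\<omega> \<in> Ad d 0 1 \<inter> S'W"
          hence False unfolding d1 Ad_def S'We using imp[of \<omega>] by auto }
        thus ?thesis by blast
      qed
      ultimately show ?thesis by blast
    next
      case False
      hence d0: "d = 0" using d by auto
      have "Ad d 0 1 = cell d 0 1 \<union> S'W"
      proof (rule set_eqI)
        fix \<omega>
        show "\<omega> \<in> Ad d 0 1 \<longleftrightarrow> \<omega> \<in> cell d 0 1 \<union> S'W" unfolding d0 cell1e Ad_def S'We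
          using imp[of \<omega>] Dp01[of 0 \<omega>] Dp01[of 1 \<omega>] by auto
      qed
      moreover have "cell d 0 1 \<inter> S'W = {}"
      proof -
        { fix \<omega> assume "\<omega> \<in> cell d 0 1 \<inter> S'W"
          hence False unfolding d0 cell1e S'We using imp[of \<omega>] by auto }
        thus ?thesis by blast
      qed
      ultimately show ?thesis by blast
    qed
  next
    case False
    have imp: "Dp 0 \<omega> = 1" if "G \<omega> = 0" "Dp 1 \<omega> = 1" for \<omega>
    proof -
      have "v 0 1 \<le> V \<omega>" using that unfolding Dp_def by (cases "v (G \<omega>) 1 \<le> V \<omega>") simp_all
      hence "v 0 0 \<le> V \<omega>" using False by linarith
      thus ?thesis using that(1) unfolding Dp_def by simp
    qed
    show ?thesis
    proof (cases "d = 1")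
      case d1: True
      have "Ad d 0 1 = cell d 0 1 \<union> S'W"
      proof (rule set_eqI)
        fix \<omega>
        show "\<omega> \<in> Ad d 0 1 \<longleftrightarrow> \<omega> \<in> cell d 0 1 \<union> S'W" unfolding d1 cell1e Ad_def S'We
          using imp[of \<omega>] Dp01[of 0 \<omega>] Dp01[of 1 \<omega>] by auto
      qed
      moreover have "cell d 0 1 \<inter> S'W = {}"
      proof -
        { fix \<omega> assume "\<omega> \<in> cell d 0 1 \<inter> S'W"
          hence False unfolding d1 cell1e S'We using imp[of \<omega>] by auto }
        thus ?thesis by blast
      qed
      ultimately show ?thesis by blast
    next
      case False
      hence d0: "d = 0" using d by auto
      have "cell d 0 1 = Ad d 0 1 \<union> S'W"
      proof (rule set_eqI)
        fix \<omega>
        show "\<omega> \<in> cell d 0 1 \<longleftrightarrow> \<omega> \<in> Ad d 0 1 \<union> S'W" unfolding d0 cell1e Ad_def S'We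
          using imp[of \<omega>] Dp01[of 0 \<omega>] Dp01[of 1 \<omega>] by auto
      qed
      moreover have "Ad d 0 1 \<inter> S'W = {}"
      proof -
        { fix \<omega> assume "\<omega> \<in> Ad d 0 1 \<inter> S'W"
          hence False unfolding d0 Ad_def S'We using imp[of \<omega>] by auto }
        thus ?thesis by blast
      qed
      ultimately show ?thesis by blast
    qed
  qed
  have lam0: "lam 0 d = measure M (cell d 0 1) / measure M (Ad d 0 1)"
    unfolding lam_def using p1[of 0] p0[of 0] posW[of 0 1] by simp
  have S'0: "Py S'W = 0" if "measure M S' = 0"
  proof -
    have "S'W \<subseteq> S'" unfolding S'W_def by auto
    moreover have "S' \<in> sets M"
    proof -
      have pre: "Dp s -` {e} \<inter> space M \<in> sets M" for s e by (rule measurable_sets[OF mDp]) simp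
      have preG: "G -` {0} \<inter> space M \<in> sets M" by (rule measurable_sets[OF measG]) simp
      have ne: "Dp 0 \<omega> \<noteq> Dp 1 \<omega> \<longleftrightarrow> (Dp 0 \<omega> = 0 \<and> Dp 1 \<omega> = 1 \<or> Dp 0 \<omega> = 1 \<and> Dp 1 \<omega> = 0)" for \<omega>
        using Dp01[of 0 \<omega>] Dp01[of 1 \<omega>] by auto
      have "S' = (G -` {0} \<inter> space M) \<inter> (((Dp 0 -` {0} \<inter> space M) \<inter> (Dp 1 -` {1} \<inter> space M))
          \<union> ((Dp 0 -` {1} \<inter> space M) \<inter> (Dp 1 -` {0} \<inter> space M)))"
        unfolding S2_def using ne by auto
      thus ?thesis using preG pre by (metis sets.Int sets.Un)
    qed
    ultimately have "measure M S'W \<le> measure M S'" using sS'W by (simp add: finite_measure_mono)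
    hence "measure M S'W = 0" using that by (simp add: antisym)
    thus ?thesis using Py_le[OF sS'W] Py_nn[of S'W] by simp
  qed
  have ccS': "ccdf M (Ypot d) S'W y = Py S'W / measure M S'W" unfolding ccdf_def Py_def ..
  have pA0: "measure M (Ad d 0 1) > 0" using posA[of 0] by simp
  have pC0: "measure M (cell d 0 1) > 0" using posC[of d 0 1] d by simp
  have K0eq: "K 0 = lam 0 d * F d 0 1 y + (if measure M S' = 0 then 0 else (1 - lam 0 d) * ccdf M (Ypot d) S'W y)"
  proof -
    have lF: "lam 0 d * F d 0 1 y = Py (cell d 0 1) / measure M (Ad d 0 1)"
      unfolding lam0 FC using pC0 by simp
    from dec0 show ?thesis
    proof
      assume a: "cell d 0 1 = Ad d 0 1 \<union> S'W \<and> Ad d 0 1 \<inter> S'W = {}"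
      have u: "measure M (cell d 0 1) = measure M (Ad d 0 1) + measure M S'W \<and> Py (cell d 0 1) = Py (Ad d 0 1) + Py S'W"
        using Un_add[OF sAd sS'W] a by simp
      have "(if measure M S' = 0 then 0 else (1 - lam 0 d) * ccdf M (Ypot d) S'W y) = - Py S'W / measure M (Ad d 0 1)"
      proof (cases "measure M S' = 0")
        case True thus ?thesis using S'0 by simp
      next
        case False
        have "1 - lam 0 d = - measure M S'W / measure M (Ad d 0 1)" unfolding lam0 using u pA0 by (simp add: field_simps)
        hence "(1 - lam 0 d) * ccdf M (Ypot d) S'W y = - (measure M S'W * (Py S'W / measure M S'W)) / measure M (Ad d 0 1)"
          unfolding ccS' by simp
        thus ?thesis using False mult_cc[OF sS'W] by simp
      qed
      thus ?thesis unfolding KPy lF using u pA0 by (simp add: field_simps)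
    next
      assume a: "Ad d 0 1 = cell d 0 1 \<union> S'W \<and> cell d 0 1 \<inter> S'W = {}"
      have u: "measure M (Ad d 0 1) = measure M (cell d 0 1) + measure M S'W \<and> Py (Ad d 0 1) = Py (cell d 0 1) + Py S'W"
        using Un_add[OF scell sS'W] a by simp
      have "(if measure M S' = 0 then 0 else (1 - lam 0 d) * ccdf M (Ypot d) S'W y) = Py S'W / measure M (Ad d 0 1)"
      proof (cases "measure M S' = 0")
        case True thus ?thesis using S'0 by simp
      next
        case False
        have "1 - lam 0 d = measure M S'W / measure M (Ad d 0 1)" unfolding lam0 using u pA0 by (simp add: field_simps)
        hence "(1 - lam 0 d) * ccdf M (Ypot d) S'W y = (measure M S'W * (Py S'W / measure M S'W)) / measure M (Ad d 0 1)"
          unfolding ccS' by simp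
        thus ?thesis using False mult_cc[OF sS'W] by simp
      qed
      thus ?thesis unfolding KPy lF using u pA0 by (simp add: field_simps)
    qed
  qed
  have pA1: "measure M (Ad d 1 1) > 0" using posA[of 1] by simp
  have pC1: "measure M (cell d 1 1) > 0" using posC[of d 1 1] d by simp
  have pW1: "measure M (W 1 1) > 0" using posW[of 1 1] by simp
  have HK: "H d (lam 0 d * F d 0 1 y + (if measure M S' = 0 then 0 else (1 - lam 0 d) * ccdf M (Ypot d) S'W y))
      = Py (Ad d 1 1) / measure M (Ad d 1 1)"
    using CIC K0eq KPy by simp
  have p10: "p d 1 0 = measure M (Ad d 1 1) / measure M (W 1 1)" using p0[of 1] by simp
  have n1: "p d 1 1 * F d 1 1 y = Py (cell d 1 1) / measure M (W 1 1)" unfolding p1 FC using pC1 by simp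
  have n2: "p d 1 0 * (Py (Ad d 1 1) / measure M (Ad d 1 1)) = Py (Ad d 1 1) / measure M (W 1 1)"
    unfolding p10 using pA1 by simp
  have dd: "p d 1 1 - p d 1 0 = (measure M (cell d 1 1) - measure M (Ad d 1 1)) / measure M (W 1 1)"
    unfolding p1 p10 by (simp add: diff_divide_distrib)
  have divdiv: "(a / w) / (b / w) = a / b" if "w \<noteq> 0" for a b w :: real
    using that by (cases "b = 0") (auto simp: field_simps)
  have RHS: "(p d 1 1 * F d 1 1 y - p d 1 0 * (Py (Ad d 1 1) / measure M (Ad d 1 1))) / (p d 1 1 - p d 1 0)
     = Py SW / measure M SW"
  proof -
    have e: "(p d 1 1 * F d 1 1 y - p d 1 0 * (Py (Ad d 1 1) / measure M (Ad d 1 1))) / (p d 1 1 - p d 1 0)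
      = (Py (cell d 1 1) - Py (Ad d 1 1)) / (measure M (cell d 1 1) - measure M (Ad d 1 1))"
    proof -
      have "(p d 1 1 * F d 1 1 y - p d 1 0 * (Py (Ad d 1 1) / measure M (Ad d 1 1))) / (p d 1 1 - p d 1 0)
        = (Py (cell d 1 1) / measure M (W 1 1) - Py (Ad d 1 1) / measure M (W 1 1))
          / ((measure M (cell d 1 1) - measure M (Ad d 1 1)) / measure M (W 1 1))"
        unfolding n1 n2 dd ..
      also have "\<dots> = ((Py (cell d 1 1) - Py (Ad d 1 1)) / measure M (W 1 1))
          / ((measure M (cell d 1 1) - measure M (Ad d 1 1)) / measure M (W 1 1))"
        by (simp only: diff_divide_distrib)
      also have "\<dots> = (Py (cell d 1 1) - Py (Ad d 1 1)) / (measure M (cell d 1 1) - measure M (Ad d 1 1))"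
        by (rule divdiv) (use pW1 in simp)
      finally show ?thesis .
    qed
    from dec1 show ?thesis
    proof
      assume a: "cell d 1 1 = Ad d 1 1 \<union> SW \<and> Ad d 1 1 \<inter> SW = {}"
      have u: "measure M (cell d 1 1) = measure M (Ad d 1 1) + measure M SW \<and> Py (cell d 1 1) = Py (Ad d 1 1) + Py SW"
        using Un_add[OF sAd sSW] a by simp
      show ?thesis unfolding e using u by simp
    next
      assume a: "Ad d 1 1 = cell d 1 1 \<union> SW \<and> cell d 1 1 \<inter> SW = {}"
      have u: "measure M (Ad d 1 1) = measure M (cell d 1 1) + measure M SW \<and> Py (Ad d 1 1) = Py (cell d 1 1) + Py SW"
        using Un_add[OF scell sSW] a by simp
      have "(Py (cell d 1 1) - Py (Ad d 1 1)) / (measure M (cell d 1 1) - measure M (Ad d 1 1))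
          = (- Py SW) / (- measure M SW)" using u by simp
      thus ?thesis unfolding e by simp
    qed
  qed
  show "ccdf M (Ypot d) (S \<inter> {\<omega> \<in> space M. T \<omega> = 1}) y
     = (p d 1 1 * F d 1 1 y
        - p d 1 0 * H d (lam 0 d * F d 0 1 y
            + (if measure M S' = 0 then 0
               else (1 - lam 0 d) * ccdf M (Ypot d) (S' \<inter> {\<omega> \<in> space M. T \<omega> = 1}) y)))
       / (p d 1 1 - p d 1 0)"
    using HK RHS unfolding SW_def S'W_def ccdf_def Py_def by simp
qed

end
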